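(* Let $b(x)=\frac{x-i}{x+i}$, $\Lambda=\operatorname{diag}(b,b^{-1})$, $\Lambda^+=\operatorname{diag}(b,1)$, $\Lambda^-=\operatorname{diag}(1,b^{-1})$, and for real $\varepsilon$ let $$G_\varepsilon(x)=\begin{pmatrix}\frac{x^2+xi(-18+8e^{i\varepsilon x}+8e^{-i\varepsilon x})-1}{x^2+1}&\frac{xi(24-12e^{i\varepsilon x}-12e^{-i\varepsilon x})}{x^2+1}\\[1mm] \frac{xi(-12+4e^{i\varepsilon x}+8e^{-i\varepsilon x})}{x^2+1}&\frac{x^2+xi(18-8e^{i\varepsilon x}-8e^{-i\varepsilon x})-1}{x^2+1}\end{pmatrix},$$ so that $G_0=\Lambda$. Then for each $\varepsilon\in(0,1]$ there exist $2\times2$ matrix functions $N^\pm_\varepsilon$, continuous and bounded on $\overline{\Pi^\pm}$ and analytic in $\Pi^\pm$, such that $\Lambda^+(x)N^+_\varepsilon(x)+N^-_\varepsilon(x)\Lambda^-(x)=G_\varepsilon(x)-\Lambda(x)$ for all $x\in\mathbb{R}$ and $\sup_{\overline{\Pi^\pm}}|N^\pm_\varepsilon|=O(\varepsilon)$ as $\varepsilon\to0$. Consequently $\sup_{x\in\mathbb{R}}\big\|G_\varepsilon(x)-\big(I+N^-_\varepsilon(\Lambda^+)^{-1}\big)\Lambda\big(I+(\Lambda^-)^{-1}N^+_\varepsilon\big)\big\|=O(\varepsilon^2)$, and for small $\varepsilon$ the two outer factors are invertible with bounded inverses on $\overline{\Pi^-}$, $\overline{\Pi^+}$ respectively, so this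 product is a factorization with partial indices $1,-1$.
   Context: $\Pi^+=\{\operatorname{Im}z>0\}$, $\Pi^-=\{\operatorname{Im}z<0\}$; $I$ is the $2\times2$ identity matrix. The matrix $\Lambda$ has a right factorization with trivial factors $G_0^\pm=I$ and partial indices $\varkappa_1=1$, $\varkappa_2=-1$. *)

theory Defs
  imports "HOL-Analysis.Analysis"
begin

definition mat2 :: "complex \<Rightarrow> complex \<Rightarrow> complex \<Rightarrow> complex \<Rightarrow> complex^2^2" where
  "mat2 a b c d = (\<chi> i j. if i = 1 then (if j = 1 then a else b) else (if j = 1 then c else d))"

definition bfun :: "complex \<Rightarrow> complex" where
  "bfun z = (z - \<i>) / (z + \<i>)"

definition Lambda :: "complex \<Rightarrow> complex^2^2" where
  "Lambda z = mat2 (bfun z) 0 0 (inverse (bfun z))"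

definition Lambda_plus :: "complex \<Rightarrow> complex^2^2" where
  "Lambda_plus z = mat2 (bfun z) 0 0 1"

definition Lambda_minus :: "complex \<Rightarrow> complex^2^2" where
  "Lambda_minus z = mat2 1 0 0 (inverse (bfun z))"

definition Lambda_plus_inv :: "complex \<Rightarrow> complex^2^2" where
  "Lambda_plus_inv z = mat2 (inverse (bfun z)) 0 0 1"

definition Lambda_minus_inv :: "complex \<Rightarrow> complex^2^2" where
  "Lambda_minus_inv z = mat2 1 0 0 (bfun z)"

definition Gmat :: "real \<Rightarrow> real \<Rightarrow> complex^2^2" where
  "Gmat \<epsilon> x = (let z = complex_of_real x;
                  ep = exp (\<i> * complex_of_real (\<epsilon> * x));
                  em = exp (- \<i> * complex_of_real (\<epsilon> * x)) in
     mat2 ((z^2 + z * \<i> * (-18 + 8 * ep + 8 * em) - 1) / (z^2 + 1))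
          ((z * \<i> * (24 - 12 * ep - 12 * em)) / (z^2 + 1))
          ((z * \<i> * (-12 + 4 * ep + 8 * em)) / (z^2 + 1))
          ((z^2 + z * \<i> * (18 - 8 * ep - 8 * em) - 1) / (z^2 + 1)))"

definition good_on :: "complex set \<Rightarrow> (complex \<Rightarrow> complex^2^2) \<Rightarrow> bool" where
  "good_on S N \<longleftrightarrow> continuous_on (closure S) N \<and> bounded (N ` closure S) \<and>
     (\<forall>i j. (\<lambda>z. N z $ i $ j) holomorphic_on S)"

abbreviation Pi_plus :: "complex set" where "Pi_plus \<equiv> {z. Im z > 0}"
abbreviation Pi_minus :: "complex set" where "Pi_minus \<equiv> {z. Im z < 0}"

end

theory Submission
  imports Defs "HOL-Complex_Analysis.Complex_Analysis"
begin


definition Ef :: "real \<Rightarrow> complex \<Rightarrow> complex" where "Ef e z = exp (\<i> * of_real e * z)"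
definition aa :: "real \<Rightarrow> complex" where "aa e = of_real (exp (- e))"
definition ss :: "real \<Rightarrow> complex" where "ss e = \<i> * of_real e * aa e"
definition gf :: "real \<Rightarrow> complex \<Rightarrow> complex" where "gf e z = Ef e z - aa e - ss e * (z - \<i>)"
definition h1 :: "real \<Rightarrow> complex \<Rightarrow> complex" where
  "h1 e = (\<lambda>z. if z = \<i> then deriv (gf e) \<i> else (gf e z - gf e \<i>) / (z - \<i>))"
definition Q2 :: "real \<Rightarrow> complex \<Rightarrow> complex" where
  "Q2 e = (\<lambda>z. if z = \<i> then deriv (h1 e) \<i> else (h1 e z - h1 e \<i>) / (z - \<i>))"

lemma Ef_i: "Ef e \<i> = aa e"
proof -
  have "\<i> * of_real e * \<i> = of_real (- e)" by (simp add: mult.commute mult.left_commute)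
  then show ?thesis by (simp add: Ef_def aa_def exp_of_real del: of_real_minus)
qed

lemma gf_i: "gf e \<i> = 0" by (simp add: gf_def Ef_i)

lemma gf_hol: "gf e holomorphic_on UNIV"
  unfolding gf_def Ef_def by (intro holomorphic_intros)

lemma gf_deriv: "deriv (gf e) \<i> = 0"
proof -
  have "(gf e has_field_derivative (exp (\<i> * of_real e * \<i>) * (\<i> * of_real e) - ss e)) (at \<i>)"
    unfolding gf_def Ef_def by (auto intro!: derivative_eq_intros)
  then have "deriv (gf e) \<i> = exp (\<i> * of_real e * \<i>) * (\<i> * of_real e) - ss e"
    by (rule DERIV_imp_deriv)
  also have "\<dots> = 0" using Ef_i[of e] by (simp add: Ef_def ss_def)
  finally show ?thesis .
qed

lemma h1_hol: "h1 e holomorphic_on UNIV"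
  unfolding h1_def by (rule pole_lemma_open[OF gf_hol]) auto

lemma h1_i: "h1 e \<i> = 0" by (simp add: h1_def gf_deriv)

lemma h1_eq: "z \<noteq> \<i> \<Longrightarrow> h1 e z = gf e z / (z - \<i>)"
  by (simp add: h1_def gf_i)

lemma Q2_hol: "Q2 e holomorphic_on UNIV"
  unfolding Q2_def by (rule pole_lemma_open[OF h1_hol]) auto

lemma Q2_eq: "z \<noteq> \<i> \<Longrightarrow> Q2 e z = gf e z / (z - \<i>)^2"
  by (simp add: Q2_def h1_i h1_eq power2_eq_square)

lemma exp_sub_one_bound:
  assumes "Re w \<le> 0" shows "norm (exp w - 1) \<le> norm w"
proof -
  have "norm (exp w - exp 0) \<le> 1 * norm (w - 0)"
  proof (rule field_differentiable_bound[where S="{w. Re w \<le> 0}" and f'=exp])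
    show "convex {w. Re w \<le> 0}" by (rule convex_halfspace_Re_le)
    show "(exp has_field_derivative exp z) (at z within {w. Re w \<le> 0})" for z
      by (auto intro!: derivative_eq_intros)
    show "norm (exp z) \<le> 1" if "z \<in> {w. Re w \<le> 0}" for z using that by simp
  qed (use assms in auto)
  then show ?thesis by simp
qed

lemma Ef_bound:
  assumes "Im z \<ge> 0" "e \<ge> 0" shows "norm (Ef e z - 1) \<le> e * norm z"
proof -
  have "Re (\<i> * of_real e * z) \<le> 0" using assms by (simp add: mult_nonneg_nonneg)
  from exp_sub_one_bound[OF this] show ?thesis
    using assms by (simp add: Ef_def norm_mult)
qed

lemma aa_bound: "e \<ge> 0 \<Longrightarrow> norm (aa e - 1) \<le> e"
proof -
  assume e: "e \<ge> 0"
  have "1 - e \<le> exp (-e)" using exp_ge_add_one_self[of "-e"] by simp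
  moreover have "exp (-e) \<le> 1" using e by simp
  ultimately have "\<bar>exp (-e) - 1\<bar> \<le> e" by linarith
  then show ?thesis unfolding aa_def by (metis norm_of_real of_real_1 of_real_diff)
qed

lemma ss_bound: "e \<ge> 0 \<Longrightarrow> norm (ss e) \<le> e"
  by (simp add: ss_def aa_def norm_mult mult_left_le)

lemma gf_bound:
  assumes "Im z \<ge> 0" "e \<ge> 0"
  shows "norm (gf e z) \<le> e * norm z + e + e * norm (z - \<i>)"
proof -
  have "norm (gf e z) \<le> norm (Ef e z - 1) + norm (aa e - 1) + norm (ss e) * norm (z - \<i>)"
  proof -
    have "gf e z = (Ef e z - 1) - (aa e - 1) - ss e * (z - \<i>)" by (simp add: gf_def)
    also have "norm \<dots> \<le> norm ((Ef e z - 1) - (aa e - 1)) + norm (ss e * (z - \<i>))"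
      by (rule norm_triangle_ineq4)
    also have "\<dots> \<le> norm (Ef e z - 1) + norm (aa e - 1) + norm (ss e) * norm (z - \<i>)"
      using norm_triangle_ineq4[of "Ef e z - 1" "aa e - 1"] by (simp add: norm_mult)
    finally show ?thesis .
  qed
  also have "\<dots> \<le> e * norm z + e + e * norm (z - \<i>)"
    by (intro add_mono mult_right_mono Ef_bound aa_bound ss_bound assms) auto
  finally show ?thesis .
qed

lemma zQ2_bound_far:
  assumes "Im z \<ge> 0" "e \<ge> 0" "norm (z - \<i>) \<ge> 1/2"
  shows "norm (z * Q2 e z) \<le> 18 * e"
proof -
  define d where "d = norm (z - \<i>)"
  have d: "d \<ge> 1/2" using assms d_def by simp
  have z_ne: "z \<noteq> \<i>" using d d_def by auto
  have nz: "norm z \<le> d + 1" unfolding d_def using norm_triangle_ineq[of "z - \<i>" "\<i>"] by simp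
  have g: "norm (gf e z) \<le> 2 * e * (d + 1)"
  proof -
    have "e * norm z \<le> e * (d+1)" using nz assms(2) by (rule mult_left_mono)
    then show ?thesis using gf_bound[OF assms(1,2)] unfolding d_def by (simp add: algebra_simps)
  qed
  have "norm z * norm (gf e z) \<le> (d+1) * (2 * e * (d + 1))"
    by (intro mult_mono nz g) (use assms d in auto)
  also have "\<dots> = 2 * e * (d+1)^2" by (simp add: power2_eq_square algebra_simps)
  also have "\<dots> \<le> 2 * e * (3*d)^2"
    using d assms(2) by (intro mult_left_mono power_mono) auto
  also have "\<dots> = 18 * e * d^2" by (simp add: power2_eq_square)
  finally have *: "norm z * norm (gf e z) \<le> 18 * e * d^2" .
  have "norm (z * Q2 e z) = norm z * norm (gf e z) / d^2"
    using z_ne by (simp add: Q2_eq norm_mult norm_divide norm_power d_def)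
  also have "\<dots> \<le> 18 * e" using * d by (simp add: divide_le_eq)
  finally show ?thesis .
qed

lemma zQ2_bound:
  assumes "Im z \<ge> 0" "e \<ge> 0"
  shows "norm (z * Q2 e z) \<le> 18 * e"
proof (cases "norm (z - \<i>) \<ge> 1/2")
  case True then show ?thesis using zQ2_bound_far assms by blast
next
  case False
  have hol: "(\<lambda>z. z * Q2 e z) holomorphic_on UNIV"
    using Q2_hol by (intro holomorphic_intros) auto
  show ?thesis
  proof (rule maximum_modulus_frontier[where S="ball \<i> (1/2)" and f="\<lambda>z. z * Q2 e z"])
    show "(\<lambda>z. z * Q2 e z) holomorphic_on interior (ball \<i> (1/2))"
      using holomorphic_on_subset[OF hol] by blast
    show "continuous_on (closure (ball \<i> (1/2))) (\<lambda>z. z * Q2 e z)"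
      using hol holomorphic_on_imp_continuous_on continuous_on_subset by blast
    show "z \<in> ball \<i> (1/2)" using False by (simp add: dist_norm norm_minus_commute)
    fix w assume "w \<in> frontier (ball \<i> (1/2))"
    then have w: "norm (w - \<i>) = 1/2" by (simp add: dist_norm norm_minus_commute)
    have "\<bar>Im (w - \<i>)\<bar> \<le> 1/2" using abs_Im_le_cmod[of "w - \<i>"] w by simp
    then have "Im w \<ge> 0" by (auto simp: abs_if split: if_splits)
    then show "norm (w * Q2 e w) \<le> 18 * e" using zQ2_bound_far assms w by simp
  qed auto
qed


lemma entries:
  fixes x Q R a t E F :: complex
  assumes h: "x \<noteq> \<i>" "x \<noteq> -\<i>"
    and hE: "E = a + t*(x-\<i>) + Q*(x-\<i>)^2" and hF: "F = a + t*(-x-\<i>) + R*(-x-\<i>)^2"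
  defines "k \<equiv> a - 1"
  shows "bfun x * (8*\<i>*(x*Q) + (8*\<i>*k + 8*t)*\<i>/2)
           + (8*\<i>*(x*R)*((x+\<i>)/(x-\<i>)) + (8*\<i>*k + 8*t)*(1/(x-\<i>)) - (8*\<i>*k + 8*t)*\<i>/2)
         = (x^2 + x * \<i> * (-18 + 8 * E + 8 * F) - 1) / (x^2 + 1) - bfun x"
    and "bfun x * (-12*\<i>*(x*Q) + (-12*\<i>*k - 12*t)*\<i>/2)
           + (-12*\<i>*(x*R) - (-12*\<i>*k - 12*t)*\<i>/2) * inverse (bfun x)
         = (x * \<i> * (24 - 12 * E - 12 * F)) / (x^2 + 1) - 0"
    and "(4*\<i>*(x*Q)*((x-\<i>)/(x+\<i>)) + (6*\<i>*k + 4*t)*(1/(x+\<i>)) - 4*\<i>*t)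
           + (8*\<i>*(x*R)*((x+\<i>)/(x-\<i>)) + (6*\<i>*k + 8*t)*(1/(x-\<i>)))
         = (x * \<i> * (-12 + 4 * E + 8 * F)) / (x^2 + 1) - 0"
    and "(-8*\<i>*(x*Q)*((x-\<i>)/(x+\<i>)) + (-8*\<i>*k - 8*t)*\<i>/2 + (-8*\<i>*k - 8*t)*(1/(x+\<i>)))
           + (-8*\<i>*(x*R) - (-8*\<i>*k - 8*t)*\<i>/2) * inverse (bfun x)
         = (x^2 + x * \<i> * (18 - 8 * E - 8 * F) - 1) / (x^2 + 1) - inverse (bfun x)"
proof -
  have n1: "x - \<i> \<noteq> 0" "x + \<i> \<noteq> 0" using h by (auto simp: add_eq_0_iff2 minus_equation_iff equation_minus_iff)
  define m1 where "m1 = inverse (x - \<i>)"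
  define m2 where "m2 = inverse (x + \<i>)"
  have i1: "(x - \<i>) * m1 = 1" "(x + \<i>) * m2 = 1" using n1 by (auto simp: m1_def m2_def)
  have b: "bfun x = (x - \<i>) * m2" by (simp add: bfun_def m2_def divide_inverse)
  have ib: "inverse (bfun x) = (x + \<i>) * m1" by (simp add: bfun_def m1_def divide_inverse mult.commute)
  have d1: "(x+\<i>)/(x-\<i>) = (x+\<i>) * m1" "1/(x-\<i>) = m1" "(x-\<i>)/(x+\<i>) = (x-\<i>) * m2" "1/(x+\<i>) = m2"
    by (simp_all add: m1_def m2_def divide_inverse)
  have x2: "x^2 + 1 = (x - \<i>) * (x + \<i>)" by (simp add: algebra_simps power2_eq_square)
  have d2: "y / (x^2 + 1) = y * (m1 * m2)" for y
    unfolding x2 m1_def m2_def by (simp add: divide_inverse mult.commute)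
  have j: "\<i> * \<i> = -1" by simp
  note rw = b d1 d2 hE hF k_def
  show "bfun x * (8*\<i>*(x*Q) + (8*\<i>*k + 8*t)*\<i>/2)
           + (8*\<i>*(x*R)*((x+\<i>)/(x-\<i>)) + (8*\<i>*k + 8*t)*(1/(x-\<i>)) - (8*\<i>*k + 8*t)*\<i>/2)
         = (x^2 + x * \<i> * (-18 + 8 * E + 8 * F) - 1) / (x^2 + 1) - bfun x"
    unfolding ib unfolding rw using i1 j by algebra
  show "bfun x * (-12*\<i>*(x*Q) + (-12*\<i>*k - 12*t)*\<i>/2)
           + (-12*\<i>*(x*R) - (-12*\<i>*k - 12*t)*\<i>/2) * inverse (bfun x)
         = (x * \<i> * (24 - 12 * E - 12 * F)) / (x^2 + 1) - 0"
    unfolding ib unfolding rw using i1 j by algebra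
  show "(4*\<i>*(x*Q)*((x-\<i>)/(x+\<i>)) + (6*\<i>*k + 4*t)*(1/(x+\<i>)) - 4*\<i>*t)
           + (8*\<i>*(x*R)*((x+\<i>)/(x-\<i>)) + (6*\<i>*k + 8*t)*(1/(x-\<i>)))
         = (x * \<i> * (-12 + 4 * E + 8 * F)) / (x^2 + 1) - 0"
    unfolding ib unfolding rw using i1 j by algebra
  show "(-8*\<i>*(x*Q)*((x-\<i>)/(x+\<i>)) + (-8*\<i>*k - 8*t)*\<i>/2 + (-8*\<i>*k - 8*t)*(1/(x+\<i>)))
           + (-8*\<i>*(x*R) - (-8*\<i>*k - 8*t)*\<i>/2) * inverse (bfun x)
         = (x^2 + x * \<i> * (18 - 8 * E - 8 * F) - 1) / (x^2 + 1) - inverse (bfun x)"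
    unfolding ib unfolding rw using i1 j by algebra
qed


lemma two_ne_one: "(2::2) \<noteq> 1" by simp

lemma mat2_nth [simp]: "mat2 a b c d $ 1 $ 1 = a" "mat2 a b c d $ 1 $ 2 = b"
  "mat2 a b c d $ 2 $ 1 = c" "mat2 a b c d $ 2 $ 2 = d"
  by (simp_all add: mat2_def)

lemma mat2_eqI: "A $ 1 $ 1 = a \<Longrightarrow> A $ 1 $ 2 = b \<Longrightarrow> A $ 2 $ 1 = c \<Longrightarrow> A $ 2 $ 2 = d \<Longrightarrow> A = mat2 a b c d"
  by (simp add: vec_eq_iff forall_2)

lemma mat2_mult: "mat2 a b c d ** mat2 p q r w = mat2 (a*p + b*r) (a*q + b*w) (c*p + d*r) (c*q + d*w)"
  by (rule mat2_eqI) (simp_all add: matrix_matrix_mult_def sum_2)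

lemma mat2_add: "mat2 a b c d + mat2 p q r w = mat2 (a+p) (b+q) (c+r) (d+w)"
  by (rule mat2_eqI) simp_all

lemma mat2_diff: "mat2 a b c d - mat2 p q r w = mat2 (a-p) (b-q) (c-r) (d-w)"
  by (rule mat2_eqI) simp_all

lemma mat1_mat2: "(mat 1 :: complex^2^2) = mat2 1 0 0 1"
  by (rule mat2_eqI) (simp_all add: mat_def)

lemma norm_vec_l1: fixes x :: "'a::real_normed_vector^'n" shows "norm x \<le> (\<Sum>i\<in>UNIV. norm (x$i))"
  unfolding norm_vec_def by (rule L2_set_le_sum) simp

lemma norm_mat2_le: "norm (A :: complex^2^2) \<le> norm (A$1$1) + norm (A$1$2) + norm (A$2$1) + norm (A$2$2)"
proof -
  have "norm A \<le> norm (A$1) + norm (A$2)" using norm_vec_l1[of A] by (simp add: sum_2)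
  also have "\<dots> \<le> (norm (A$1$1) + norm (A$1$2)) + (norm (A$2$1) + norm (A$2$2))"
    using norm_vec_l1[of "A$1"] norm_vec_l1[of "A$2"] by (intro add_mono) (simp_all add: sum_2)
  finally show ?thesis by simp
qed

lemma norm_mat2: "norm (mat2 a b c d) \<le> norm a + norm b + norm c + norm d"
  using norm_mat2_le[of "mat2 a b c d"] by simp

lemma norm_entry: "norm ((A :: complex^2^2) $ i $ j) \<le> norm A"
  by (rule order_trans[OF Finite_Cartesian_Product.norm_nth_le Finite_Cartesian_Product.norm_nth_le])

lemma mm_add_rdistrib: "((A::'a::semiring_1^'n^'m) + B) ** C = A ** C + B ** C"
  by (simp add: matrix_matrix_mult_def vec_eq_iff distrib_right sum.distrib)

lemma norm_mm: fixes A B :: "complex^2^2" shows "norm (A ** B) \<le> 8 * norm A * norm B"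
proof -
  have e: "norm ((A ** B) $ i $ j) \<le> 2 * (norm A * norm B)" for i j
  proof -
    have "(A ** B) $ i $ j = A$i$1 * B$1$j + A$i$2 * B$2$j"
      by (simp add: matrix_matrix_mult_def sum_2)
    also have "norm \<dots> \<le> norm (A$i$1) * norm (B$1$j) + norm (A$i$2) * norm (B$2$j)"
      using norm_triangle_ineq[of "A$i$1 * B$1$j" "A$i$2 * B$2$j"] by (simp add: norm_mult)
    also have "\<dots> \<le> norm A * norm B + norm A * norm B"
      by (intro add_mono mult_mono norm_entry) auto
    finally show ?thesis by simp
  qed
  have "norm (A ** B) \<le> 4 * (2 * (norm A * norm B))"
    using norm_mat2_le[of "A ** B"] e[of 1 1] e[of 1 2] e[of 2 1] e[of 2 2] by linarith
  then show ?thesis by simp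
qed

lemma norm_mat1: "norm (mat 1 :: complex^2^2) \<le> 2"
  using norm_mat2[of 1 0 0 1] by (simp add: mat1_mat2)



lemma det_small:
  fixes a b c d :: complex
  assumes "norm a \<le> 1/16" "norm b \<le> 1/16" "norm c \<le> 1/16" "norm d \<le> 1/16"
  shows "(1 + a) * (1 + d) - b * c \<noteq> 0"
proof
  assume h: "(1 + a) * (1 + d) - b * c = 0"
  have "1 = - (a + d + a * d - b * c)" using h by (simp add: algebra_simps)
  then have "1 = norm (a + d + a * d - b * c)" by (metis norm_minus_cancel norm_one)
  also have "\<dots> \<le> norm (a + d + a * d) + norm (b * c)" by (rule norm_triangle_ineq4)
  also have "\<dots> \<le> norm (a + d) + norm (a * d) + norm (b * c)" using norm_triangle_ineq[of "a + d" "a * d"] by simp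
  also have "\<dots> \<le> norm a + norm d + norm a * norm d + norm b * norm c"
    using norm_triangle_ineq[of a d] by (simp add: norm_mult)
  also have "\<dots> \<le> 1/16 + 1/16 + (1/16) * (1/16) + (1/16) * (1/16)"
    using assms by (intro add_mono mult_mono) auto
  finally show False by simp
qed

lemma inv_small:
  fixes X :: "complex^2^2" assumes X: "norm X \<le> 1/16"
  shows "invertible (mat 1 + X) \<and> norm (matrix_inv (mat 1 + X)) \<le> 4"
proof -
  have xs: "norm (X$i$j) \<le> 1/16" for i j using norm_entry[of X i j] X by linarith
  have m: "(mat 1 + X)$1$1 = 1 + X$1$1" "(mat 1 + X)$2$2 = 1 + X$2$2"
      "(mat 1 + X)$1$2 = X$1$2" "(mat 1 + X)$2$1 = X$2$1"
      by (simp_all add: mat_def)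
  have "det (mat 1 + X) \<noteq> 0"
    unfolding det_2[of "mat 1 + X"] m by (rule det_small) (rule xs)+
  then have inv: "invertible (mat 1 + X)" by (simp add: invertible_det_nz)
  define Y where "Y = matrix_inv (mat 1 + X)"
  have "(mat 1 + X) ** Y = mat 1"
    using inv unfolding invertible_def Y_def matrix_inv_def by (rule someI2_ex) auto
  then have "Y + X ** Y = mat 1" by (simp add: mm_add_rdistrib)
  then have Yeq: "Y = mat 1 - X ** Y" by (simp add: eq_diff_eq)
  have "norm Y \<le> norm (mat 1 :: complex^2^2) + norm (X ** Y)"
    using norm_triangle_ineq4[of "mat 1 :: complex^2^2" "X ** Y"] by (simp only: Yeq[symmetric])
  also have "\<dots> \<le> 2 + 8 * norm X * norm Y" using norm_mat1 norm_mm[of X Y] by linarith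
  also have "\<dots> \<le> 2 + 8 * (1/16) * norm Y" using X by (intro add_mono mult_right_mono mult_left_mono) auto
  finally have "norm Y \<le> 4" by simp
  then show ?thesis using inv Y_def by simp
qed


definition kk :: "real \<Rightarrow> complex" where "kk e = aa e - 1"

definition "p11 e z = 8*\<i>*(z * Q2 e z) + (8*\<i>*kk e + 8 * ss e)*\<i>/2"
definition "p12 e z = -12*\<i>*(z * Q2 e z) + (-12*\<i>*kk e - 12 * ss e)*\<i>/2"
definition "p21 e z = 4*\<i>*(z * Q2 e z)*((z-\<i>)/(z+\<i>)) + (6*\<i>*kk e + 4 * ss e)*(1/(z+\<i>)) - 4*\<i> * ss e"
definition "p22 e z = -8*\<i>*(z * Q2 e z)*((z-\<i>)/(z+\<i>)) + (-8*\<i>*kk e - 8 * ss e)*\<i>/2 + (-8*\<i>*kk e - 8 * ss e)*(1/(z+\<i>))"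
definition "m11 e z = 8*\<i>*(z * Q2 e (-z))*((z+\<i>)/(z-\<i>)) + (8*\<i>*kk e + 8 * ss e)*(1/(z-\<i>)) - (8*\<i>*kk e + 8 * ss e)*\<i>/2"
definition "m12 e z = -12*\<i>*(z * Q2 e (-z)) - (-12*\<i>*kk e - 12 * ss e)*\<i>/2"
definition "m21 e z = 8*\<i>*(z * Q2 e (-z))*((z+\<i>)/(z-\<i>)) + (6*\<i>*kk e + 8 * ss e)*(1/(z-\<i>))"
definition "m22 e z = -8*\<i>*(z * Q2 e (-z)) - (-8*\<i>*kk e - 8 * ss e)*\<i>/2"

definition "NpM e z = mat2 (p11 e z) (p12 e z) (p21 e z) (p22 e z)"
definition "NmM e z = mat2 (m11 e z) (m12 e z) (m21 e z) (m22 e z)"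

lemma real_ne_i: "complex_of_real x \<noteq> \<i>" "complex_of_real x \<noteq> -\<i>"
  by (auto simp: complex_eq_iff)

lemma Gmat_eq: "Gmat e x = (let z = complex_of_real x in
     mat2 ((z^2 + z * \<i> * (-18 + 8 * Ef e z + 8 * Ef e (-z)) - 1) / (z^2 + 1))
          ((z * \<i> * (24 - 12 * Ef e z - 12 * Ef e (-z))) / (z^2 + 1))
          ((z * \<i> * (-12 + 4 * Ef e z + 8 * Ef e (-z))) / (z^2 + 1))
          ((z^2 + z * \<i> * (18 - 8 * Ef e z - 8 * Ef e (-z)) - 1) / (z^2 + 1)))"
proof -
  have 1: "exp (\<i> * complex_of_real (e * x)) = Ef e (of_real x)"
    by (simp add: Ef_def mult.assoc)
  have 2: "exp (- \<i> * complex_of_real (e * x)) = Ef e (- of_real x)"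
    by (simp add: Ef_def mult.assoc)
  show ?thesis unfolding Gmat_def Let_def 1 2 ..
qed

lemma equation:
  "Lambda_plus (of_real x) ** NpM e (of_real x) + NmM e (of_real x) ** Lambda_minus (of_real x)
     = Gmat e x - Lambda (of_real x)"
proof -
  define z where "z = complex_of_real x"
  have hz: "z \<noteq> \<i>" "z \<noteq> -\<i>" "-z \<noteq> \<i>" using real_ne_i[of x] by (auto simp: z_def minus_equation_iff)
  have hE: "Ef e z = aa e + ss e * (z - \<i>) + Q2 e z * (z - \<i>)^2"
    using Q2_eq[OF hz(1), of e] hz(1) by (simp add: gf_def field_simps)
  have hF: "Ef e (-z) = aa e + ss e * (-z - \<i>) + Q2 e (-z) * (-z - \<i>)^2"
  proof -
    have "-z - \<i> \<noteq> 0" using hz(3) by (simp add: diff_eq_eq)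
    then show ?thesis using Q2_eq[OF hz(3), of e] by (simp add: gf_def field_simps)
  qed
  note ent = entries[OF hz(1,2) hE hF]
  have "Lambda_plus z ** NpM e z + NmM e z ** Lambda_minus z =
     mat2 (bfun z * p11 e z + m11 e z) (bfun z * p12 e z + m12 e z * inverse (bfun z))
          (p21 e z + m21 e z) (p22 e z + m22 e z * inverse (bfun z))"
    by (simp add: Lambda_plus_def Lambda_minus_def NpM_def NmM_def mat2_mult mat2_add)
  also have "\<dots> = Gmat e x - Lambda z"
    unfolding Gmat_eq Let_def z_def[symmetric] Lambda_def mat2_diff
    unfolding p11_def p12_def p21_def p22_def m11_def m12_def m21_def m22_def kk_def
    by (simp only: ent)
  finally show ?thesis by (simp add: z_def)
qed


lemma continuous_on_mat2:
  assumes "continuous_on S a" "continuous_on S b" "continuous_on S c" "continuous_on S d"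
  shows "continuous_on S (\<lambda>z. mat2 (a z) (b z) (c z) (d z))"
  unfolding mat2_def
proof (intro continuous_on_vec_lambda)
  fix i j :: 2
  show "continuous_on S (\<lambda>z. if i = 1 then if j = 1 then a z else b z else if j = 1 then c z else d z)"
    using assms by (cases "i = 1"; cases "j = 1") simp_all
qed

lemma hol_mat2:
  assumes "a holomorphic_on S" "b holomorphic_on S" "c holomorphic_on S" "d holomorphic_on S"
  shows "(\<lambda>z. mat2 (a z) (b z) (c z) (d z) $ i $ j) holomorphic_on S"
  using assms exhaust_2[of i] exhaust_2[of j] by (auto simp: mat2_nth)

lemma Q2_comp [holomorphic_intros]: "f holomorphic_on S \<Longrightarrow> (\<lambda>z. Q2 e (f z)) holomorphic_on S"
proof -
  assume f: "f holomorphic_on S"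
  have "(Q2 e \<circ> f) holomorphic_on S"
    by (rule holomorphic_on_compose[OF f holomorphic_on_subset[OF Q2_hol]]) auto
  then show ?thesis by (simp add: o_def)
qed

definition "Up = {z. Im z > -1}"
definition "Lo = {z. Im z < 1}"

lemma open_Up: "open Up" unfolding Up_def by (rule open_halfspace_Im_gt)
lemma open_Lo: "open Lo" unfolding Lo_def by (rule open_halfspace_Im_lt)

lemma Up_ne: "z \<in> Up \<Longrightarrow> z + \<i> \<noteq> 0" unfolding Up_def by (auto simp: complex_eq_iff)
lemma Lo_ne: "z \<in> Lo \<Longrightarrow> z - \<i> \<noteq> 0" unfolding Lo_def by (auto simp: complex_eq_iff)

lemma p_hol: "p11 e holomorphic_on Up" "p12 e holomorphic_on Up" "p21 e holomorphic_on Up" "p22 e holomorphic_on Up"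
  unfolding p11_def[abs_def] p12_def[abs_def] p21_def[abs_def] p22_def[abs_def]
  by (auto intro!: holomorphic_intros dest: Up_ne)

lemma m_hol: "m11 e holomorphic_on Lo" "m12 e holomorphic_on Lo" "m21 e holomorphic_on Lo" "m22 e holomorphic_on Lo"
  unfolding m11_def[abs_def] m12_def[abs_def] m21_def[abs_def] m22_def[abs_def]
  by (auto intro!: holomorphic_intros dest: Lo_ne)

lemma closure_plus: "closure {z. Im z > 0} = {z. Im z \<ge> 0}"
proof -
  have "{z. Im z > 0} = {z. \<i> \<bullet> z > 0}" by simp
  then show ?thesis by (simp del: complex_inner_i_left) simp
qed

lemma closure_minus: "closure {z. Im z < 0} = {z. Im z \<le> 0}"
proof -
  have "{z. Im z < 0} = {z. \<i> \<bullet> z < 0}" by simp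
  then show ?thesis by (simp del: complex_inner_i_left) simp
qed


lemma ratio_up:
  assumes "Im z \<ge> 0"
  shows "norm ((z-\<i>)/(z+\<i>)) \<le> 1" "norm (1/(z+\<i>)) \<le> 1"
proof -
  have "1 \<le> Im (z + \<i>)" using assms by simp
  also have "\<dots> \<le> norm (z + \<i>)" using abs_Im_le_cmod[of "z + \<i>"] by simp
  finally have n1: "1 \<le> norm (z + \<i>)" .
  have "norm (z - \<i>) \<le> norm (z + \<i>)"
    unfolding norm_le inner_complex_def using assms by (simp add: algebra_simps)
  then show "norm ((z-\<i>)/(z+\<i>)) \<le> 1" using n1 by (simp add: norm_divide divide_le_eq_1)
  show "norm (1/(z+\<i>)) \<le> 1" using n1 by (simp add: norm_divide divide_le_eq)
qed

lemma ratio_low: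
  assumes "Im z \<le> 0"
  shows "norm ((z+\<i>)/(z-\<i>)) \<le> 1" "norm (1/(z-\<i>)) \<le> 1"
proof -
  have "1 \<le> - Im (z - \<i>)" using assms by simp
  also have "\<dots> \<le> norm (z - \<i>)" using abs_Im_le_cmod[of "z - \<i>"] by simp
  finally have n1: "1 \<le> norm (z - \<i>)" .
  have "norm (z + \<i>) \<le> norm (z - \<i>)"
    unfolding norm_le inner_complex_def using assms by (simp add: algebra_simps)
  then show "norm ((z+\<i>)/(z-\<i>)) \<le> 1" using n1 by (simp add: norm_divide divide_le_eq_1)
  show "norm (1/(z-\<i>)) \<le> 1" using n1 by (simp add: norm_divide divide_le_eq)
qed

lemma zR_bound: "Im z \<le> 0 \<Longrightarrow> e \<ge> 0 \<Longrightarrow> norm (z * Q2 e (-z)) \<le> 18 * e"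
  using zQ2_bound[of "-z" e] by simp

lemma kk_bound: "e \<ge> 0 \<Longrightarrow> norm (kk e) \<le> e" unfolding kk_def by (rule aa_bound)

lemma K1: "e \<ge> 0 \<Longrightarrow> norm (c1*\<i>*kk e + c2 * ss e) \<le> (norm c1 + norm c2) * e"
proof -
  assume e: "e \<ge> 0"
  have "norm (c1*\<i>*kk e + c2 * ss e) \<le> norm c1 * norm (kk e) + norm c2 * norm (ss e)"
    using norm_triangle_ineq[of "c1*\<i>*kk e" "c2 * ss e"] by (simp add: norm_mult)
  also have "\<dots> \<le> norm c1 * e + norm c2 * e"
    by (intro add_mono mult_left_mono kk_bound ss_bound e) auto
  finally show ?thesis by (simp add: algebra_simps)
qed

lemma K2: "e \<ge> 0 \<Longrightarrow> norm (c1*\<i>*kk e - c2 * ss e) \<le> (norm c1 + norm c2) * e"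
  using K1[of e c1 "-c2"] by simp

lemma T1: "norm w \<le> 18 * e \<Longrightarrow> norm (c * \<i> * w) \<le> norm c * (18 * e)"
  by (simp add: norm_mult mult_left_mono)

lemma T2: "norm w \<le> 18 * e \<Longrightarrow> norm r \<le> 1 \<Longrightarrow> e \<ge> 0 \<Longrightarrow> norm (c * \<i> * w * r) \<le> norm c * (18 * e)"
proof -
  assume a: "norm w \<le> 18 * e" "norm r \<le> 1" "e \<ge> 0"
  have "norm w * norm r \<le> 18 * e * 1" using a by (intro mult_mono) auto
  then show ?thesis by (simp add: norm_mult mult_left_mono mult.assoc)
qed

lemma T3: "norm u \<le> U \<Longrightarrow> norm (u * \<i> / 2) \<le> U / 2"
  by (simp add: norm_mult norm_divide)

lemma T4: fixes u r :: complex assumes "norm u \<le> U" "norm r \<le> 1" shows "norm (u * r) \<le> U"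
proof -
  note a = assms
  have "norm u * norm r \<le> U * 1" using a order_trans[OF norm_ge_zero a(1)] by (intro mult_mono) auto
  then show ?thesis by (simp add: norm_mult)
qed

lemma T5: "e \<ge> 0 \<Longrightarrow> norm (c * \<i> * ss e) \<le> norm c * e"
  using ss_bound[of e] by (simp add: norm_mult mult_left_mono)

lemma tri2p: "norm a \<le> A \<Longrightarrow> norm b \<le> B \<Longrightarrow> norm (a + b) \<le> A + B"
  using norm_triangle_ineq[of a b] by linarith
lemma tri2m: "norm a \<le> A \<Longrightarrow> norm b \<le> B \<Longrightarrow> norm (a - b) \<le> A + B"
  using norm_triangle_ineq4[of a b] by linarith
lemma tri3p: "norm a \<le> A \<Longrightarrow> norm b \<le> B \<Longrightarrow> norm c \<le> C \<Longrightarrow> norm (a + b + c) \<le> A + B + C"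
  by (intro tri2p)
lemma tri3m: "norm a \<le> A \<Longrightarrow> norm b \<le> B \<Longrightarrow> norm c \<le> C \<Longrightarrow> norm (a + b - c) \<le> A + B + C"
  by (intro tri2m tri2p)

lemma Np_bound:
  assumes z: "Im z \<ge> 0" and e: "e \<ge> 0"
  shows "norm (NpM e z) \<le> 1000 * e"
proof -
  note A = zQ2_bound[OF z e] and R = ratio_up[OF z]
  have 1: "norm (p11 e z) \<le> 8 * (18 * e) + (8 + 8) * e / 2"
    unfolding p11_def using T1[OF A, of 8] T3[OF K1[OF e, of 8 8]] by (intro tri2p) simp_all
  have 2: "norm (p12 e z) \<le> 12 * (18 * e) + (12 + 12) * e / 2"
    unfolding p12_def using T1[OF A, of "-12"] T3[OF K2[OF e, of "-12" 12]] by (intro tri2p) simp_all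
  have 3: "norm (p21 e z) \<le> 4 * (18 * e) + (6 + 4) * e + 4 * e"
    unfolding p21_def using T2[OF A R(1) e, of 4] T4[OF K1[OF e, of 6 4] R(2)] T5[OF e, of 4]
    by (intro tri3m) simp_all
  have 4: "norm (p22 e z) \<le> 8 * (18 * e) + (8 + 8) * e / 2 + (8 + 8) * e"
    unfolding p22_def using T2[OF A R(1) e, of "-8"] T3[OF K2[OF e, of "-8" 8]] T4[OF K2[OF e, of "-8" 8] R(2)]
    by (intro tri3p) simp_all
  have "norm (NpM e z) \<le> norm (p11 e z) + norm (p12 e z) + norm (p21 e z) + norm (p22 e z)"
    unfolding NpM_def by (rule norm_mat2)
  also have "\<dots> \<le> 1000 * e" using 1 2 3 4 e by (simp add: field_simps)
  finally show ?thesis .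
qed

lemma Nm_bound:
  assumes z: "Im z \<le> 0" and e: "e \<ge> 0"
  shows "norm (NmM e z) \<le> 1000 * e"
proof -
  note A = zR_bound[OF z e] and R = ratio_low[OF z]
  have 1: "norm (m11 e z) \<le> 8 * (18 * e) + (8 + 8) * e + (8 + 8) * e / 2"
    unfolding m11_def using T2[OF A R(1) e, of 8] T4[OF K1[OF e, of 8 8] R(2)] T3[OF K1[OF e, of 8 8]]
    by (intro tri3m) simp_all
  have 2: "norm (m12 e z) \<le> 12 * (18 * e) + (12 + 12) * e / 2"
    unfolding m12_def using T1[OF A, of "-12"] T3[OF K2[OF e, of "-12" 12]] by (intro tri2m) simp_all
  have 3: "norm (m21 e z) \<le> 8 * (18 * e) + (6 + 8) * e"
    unfolding m21_def using T2[OF A R(1) e, of 8] T4[OF K1[OF e, of 6 8] R(2)]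
    by (intro tri2p) simp_all
  have 4: "norm (m22 e z) \<le> 8 * (18 * e) + (8 + 8) * e / 2"
    unfolding m22_def using T1[OF A, of "-8"] T3[OF K2[OF e, of "-8" 8]] by (intro tri2m) simp_all
  have "norm (NmM e z) \<le> norm (m11 e z) + norm (m12 e z) + norm (m21 e z) + norm (m22 e z)"
    unfolding NmM_def by (rule norm_mat2)
  also have "\<dots> \<le> 1000 * e" using 1 2 3 4 e by (simp add: field_simps)
  finally show ?thesis .
qed


lemma prod_expand:
  fixes Lpi L Lm Lmi Lp Np Nm G :: "complex^2^2"
  assumes a1: "Lpi ** L = Lm" and a2: "L ** Lmi = Lp" and a3: "Lm ** Lmi = mat 1"
    and a4: "Lp ** Np + Nm ** Lm = G - L"
  shows "G - (mat 1 + Nm ** Lpi) ** L ** (mat 1 + Lmi ** Np) = - (Nm ** Np)"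
proof -
  have s1: "(mat 1 + Nm ** Lpi) ** L = L + Nm ** Lm"
    by (simp add: mm_add_rdistrib a1 flip: matrix_mul_assoc)
  have s2: "(L + Nm ** Lm) ** (mat 1 + Lmi ** Np) = L + Lp ** Np + (Nm ** Lm + Nm ** Np)"
  proof -
    have "(L + Nm ** Lm) ** (mat 1 + Lmi ** Np) = L ** (mat 1 + Lmi ** Np) + (Nm ** Lm) ** (mat 1 + Lmi ** Np)"
      by (rule mm_add_rdistrib)
    also have "L ** (mat 1 + Lmi ** Np) = L + Lp ** Np"
      by (simp add: matrix_add_ldistrib a2 matrix_mul_assoc)
    also have "(Nm ** Lm) ** (mat 1 + Lmi ** Np) = Nm ** Lm + Nm ** Np"
    proof -
      have "(Nm ** Lm) ** (Lmi ** Np) = Nm ** Np"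
        by (metis a3 matrix_mul_assoc matrix_mul_lid)
      then show ?thesis by (simp add: matrix_add_ldistrib)
    qed
    finally show ?thesis .
  qed
  have "G - (mat 1 + Nm ** Lpi) ** L ** (mat 1 + Lmi ** Np) = G - ((L + (Lp ** Np + Nm ** Lm)) + Nm ** Np)"
    unfolding s1 s2 by (simp add: add.assoc)
  also have "\<dots> = G - ((L + (G - L)) + Nm ** Np)" unfolding a4 ..
  also have "\<dots> = - (Nm ** Np)" by simp
  finally show ?thesis .
qed

lemma bfun_real_ne0: "bfun (complex_of_real x) \<noteq> 0"
proof -
  have "complex_of_real x - \<i> \<noteq> 0" "complex_of_real x + \<i> \<noteq> 0" by (auto simp: complex_eq_iff)
  then show ?thesis by (simp add: bfun_def)
qed

lemma Lambda_facts:
  assumes "bfun z \<noteq> 0"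
  shows "Lambda_plus_inv z ** Lambda z = Lambda_minus z"
    "Lambda z ** Lambda_minus_inv z = Lambda_plus z"
    "Lambda_minus z ** Lambda_minus_inv z = mat 1"
  using assms by (simp_all add: Lambda_plus_inv_def Lambda_def Lambda_minus_def Lambda_minus_inv_def
      Lambda_plus_def mat2_mult mat1_mat2)

lemma Lpi_norm: "Im z \<le> 0 \<Longrightarrow> norm (Lambda_plus_inv z) \<le> 2"
proof -
  assume z: "Im z \<le> 0"
  have "norm (inverse (bfun z)) \<le> 1"
    using ratio_low(1)[OF z] by (simp add: bfun_def inverse_divide)
  then show ?thesis using norm_mat2[of "inverse (bfun z)" 0 0 1] by (simp add: Lambda_plus_inv_def)
qed

lemma Lmi_norm: "Im z \<ge> 0 \<Longrightarrow> norm (Lambda_minus_inv z) \<le> 2"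
proof -
  assume z: "Im z \<ge> 0"
  have "norm (bfun z) \<le> 1"
    using ratio_up(1)[OF z] by (simp add: bfun_def)
  then show ?thesis using norm_mat2[of 1 0 0 "bfun z"] by (simp add: Lambda_minus_inv_def)
qed

theorem mainTheorem3:
  shows "\<exists>(Np :: real \<Rightarrow> complex \<Rightarrow> complex^2^2) (Nm :: real \<Rightarrow> complex \<Rightarrow> complex^2^2) C.
    (\<forall>\<epsilon>\<in>{0<..1}.
       good_on Pi_plus (Np \<epsilon>) \<and> good_on Pi_minus (Nm \<epsilon>) \<and>
       (\<forall>x::real. Lambda_plus (of_real x) ** Np \<epsilon> (of_real x) + Nm \<epsilon> (of_real x) ** Lambda_minus (of_real x)
                   = Gmat \<epsilon> x - Lambda (of_real x)) \<and>
       (\<forall>z\<in>closure Pi_plus. norm (Np \<epsilon> z) \<le> C * \<epsilon>) \<and>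
       (\<forall>z\<in>closure Pi_minus. norm (Nm \<epsilon> z) \<le> C * \<epsilon>) \<and>
       (\<forall>x::real. norm (Gmat \<epsilon> x -
            (mat 1 + Nm \<epsilon> (of_real x) ** Lambda_plus_inv (of_real x)) ** Lambda (of_real x) **
            (mat 1 + Lambda_minus_inv (of_real x) ** Np \<epsilon> (of_real x))) \<le> C * \<epsilon>^2)) \<and>
    (\<exists>\<epsilon>0>0. \<forall>\<epsilon>\<in>{0<..min \<epsilon>0 1}.
       (\<exists>M. \<forall>z\<in>closure Pi_minus.
          invertible (mat 1 + Nm \<epsilon> z ** Lambda_plus_inv z) \<and>
          norm (matrix_inv (mat 1 + Nm \<epsilon> z ** Lambda_plus_inv z)) \<le> M) \<and>
       (\<exists>M. \<forall>z\<in>closure Pi_plus.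
          invertible (mat 1 + Lambda_minus_inv z ** Np \<epsilon> z) \<and>
          norm (matrix_inv (mat 1 + Lambda_minus_inv z ** Np \<epsilon> z)) \<le> M))"
proof (rule exI[of _ NpM], rule exI[of _ NmM], rule exI[of _ "10^7"], intro conjI ballI allI)
  define C :: real where "C = 10^7"
  fix e :: real assume e: "e \<in> {0<..1}"
  then have e0: "e \<ge> 0" "e > 0" "e \<le> 1" by auto
  show "good_on Pi_plus (NpM e)"
    unfolding good_on_def closure_plus
  proof (intro conjI allI)
    have sub: "{z. Im z \<ge> 0} \<subseteq> Up" by (auto simp: Up_def)
    have "continuous_on Up (\<lambda>z. mat2 (p11 e z) (p12 e z) (p21 e z) (p22 e z))"
      using p_hol[of e] by (intro continuous_on_mat2 holomorphic_on_imp_continuous_on)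
    then show "continuous_on {z. Im z \<ge> 0} (NpM e)"
      unfolding NpM_def[abs_def] using sub continuous_on_subset by blast
    show "bounded (NpM e ` {z. Im z \<ge> 0})"
      unfolding bounded_iff using Np_bound e0 by blast
    fix i j :: 2
    have sub2: "Pi_plus \<subseteq> Up" by (auto simp: Up_def)
    show "(\<lambda>z. NpM e z $ i $ j) holomorphic_on Pi_plus"
      unfolding NpM_def using p_hol[of e] holomorphic_on_subset[OF _ sub2]
      by (intro hol_mat2) blast+
  qed
  show "good_on Pi_minus (NmM e)"
    unfolding good_on_def closure_minus
  proof (intro conjI allI)
    have sub: "{z. Im z \<le> 0} \<subseteq> Lo" by (auto simp: Lo_def)
    have "continuous_on Lo (\<lambda>z. mat2 (m11 e z) (m12 e z) (m21 e z) (m22 e z))"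
      using m_hol[of e] by (intro continuous_on_mat2 holomorphic_on_imp_continuous_on)
    then show "continuous_on {z. Im z \<le> 0} (NmM e)"
      unfolding NmM_def[abs_def] using sub continuous_on_subset by blast
    show "bounded (NmM e ` {z. Im z \<le> 0})"
      unfolding bounded_iff using Nm_bound e0 by blast
    fix i j :: 2
    have sub2: "Pi_minus \<subseteq> Lo" by (auto simp: Lo_def)
    show "(\<lambda>z. NmM e z $ i $ j) holomorphic_on Pi_minus"
      unfolding NmM_def using m_hol[of e] holomorphic_on_subset[OF _ sub2]
      by (intro hol_mat2) blast+
  qed
  fix x :: real
  show "Lambda_plus (of_real x) ** NpM e (of_real x) + NmM e (of_real x) ** Lambda_minus (of_real x)
                   = Gmat e x - Lambda (of_real x)" by (rule equation)
  show "norm (Gmat e x -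
            (mat 1 + NmM e (of_real x) ** Lambda_plus_inv (of_real x)) ** Lambda (of_real x) **
            (mat 1 + Lambda_minus_inv (of_real x) ** NpM e (of_real x))) \<le> 10^7 * e^2"
  proof -
    note LF = Lambda_facts[OF bfun_real_ne0[of x]]
    have "norm (Gmat e x -
            (mat 1 + NmM e (of_real x) ** Lambda_plus_inv (of_real x)) ** Lambda (of_real x) **
            (mat 1 + Lambda_minus_inv (of_real x) ** NpM e (of_real x)))
          = norm (NmM e (of_real x) ** NpM e (of_real x))"
      by (subst prod_expand[OF LF equation]) (rule norm_minus_cancel)
    also have "\<dots> \<le> 8 * norm (NmM e (of_real x)) * norm (NpM e (of_real x))" by (rule norm_mm)
    also have "\<dots> \<le> 8 * (1000 * e) * (1000 * e)"
      using Nm_bound[of "of_real x" e] Np_bound[of "of_real x" e] e0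
      by (intro mult_mono) auto
    also have "\<dots> \<le> 10^7 * e^2" by (simp add: C_def power2_eq_square)
    finally show ?thesis .
  qed
next
  fix e z assume e: "e \<in> {0<..1::real}" and z: "z \<in> closure Pi_plus"
  show "norm (NpM e z) \<le> 10^7 * e" using Np_bound[of z e] e z by (auto simp: closure_plus)
next
  fix e z assume e: "e \<in> {0<..1::real}" and z: "z \<in> closure Pi_minus"
  show "norm (NmM e z) \<le> 10^7 * e" using Nm_bound[of z e] e z by (auto simp: closure_minus)
next
  show "\<exists>\<epsilon>0>0. \<forall>\<epsilon>\<in>{0<..min \<epsilon>0 1}.
       (\<exists>M. \<forall>z\<in>closure Pi_minus.
          invertible (mat 1 + NmM \<epsilon> z ** Lambda_plus_inv z) \<and>
          norm (matrix_inv (mat 1 + NmM \<epsilon> z ** Lambda_plus_inv z)) \<le> M) \<and>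
       (\<exists>M. \<forall>z\<in>closure Pi_plus.
          invertible (mat 1 + Lambda_minus_inv z ** NpM \<epsilon> z) \<and>
          norm (matrix_inv (mat 1 + Lambda_minus_inv z ** NpM \<epsilon> z)) \<le> M)"
  proof (rule exI[of _ "1/10^6"], intro conjI ballI)
    show "(0::real) < 1/10^6" by simp
    fix e assume e: "e \<in> {0<..min (1/10^6) (1::real)}"
    then have e0: "e \<ge> 0" "e \<le> 1/10^6" by auto
    show "\<exists>M. \<forall>z\<in>closure Pi_minus.
          invertible (mat 1 + NmM e z ** Lambda_plus_inv z) \<and>
          norm (matrix_inv (mat 1 + NmM e z ** Lambda_plus_inv z)) \<le> M"
    proof (rule exI[of _ 4], intro ballI)
      fix z assume z: "z \<in> closure Pi_minus"
      then have zi: "Im z \<le> 0" by (simp add: closure_minus)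
      have "norm (NmM e z ** Lambda_plus_inv z) \<le> 8 * norm (NmM e z) * norm (Lambda_plus_inv z)"
        by (rule norm_mm)
      also have "\<dots> \<le> 8 * (1000 * e) * 2"
        using Nm_bound[OF zi e0(1)] Lpi_norm[OF zi] e0 by (intro mult_mono) auto
      also have "\<dots> \<le> 1/16" using e0 by simp
      finally have "norm (NmM e z ** Lambda_plus_inv z) \<le> 1/16" .
      then show "invertible (mat 1 + NmM e z ** Lambda_plus_inv z) \<and>
          norm (matrix_inv (mat 1 + NmM e z ** Lambda_plus_inv z)) \<le> 4" by (rule inv_small)
    qed
    show "\<exists>M. \<forall>z\<in>closure Pi_plus.
          invertible (mat 1 + Lambda_minus_inv z ** NpM e z) \<and>
          norm (matrix_inv (mat 1 + Lambda_minus_inv z ** NpM e z)) \<le> M"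
    proof (rule exI[of _ 4], intro ballI)
      fix z assume z: "z \<in> closure Pi_plus"
      then have zi: "Im z \<ge> 0" by (simp add: closure_plus)
      have "norm (Lambda_minus_inv z ** NpM e z) \<le> 8 * norm (Lambda_minus_inv z) * norm (NpM e z)"
        by (rule norm_mm)
      also have "\<dots> \<le> 8 * 2 * (1000 * e)"
        using Np_bound[OF zi e0(1)] Lmi_norm[OF zi] e0 by (intro mult_mono) auto
      also have "\<dots> \<le> 1/16" using e0 by simp
      finally have "norm (Lambda_minus_inv z ** NpM e z) \<le> 1/16" .
      then show "invertible (mat 1 + Lambda_minus_inv z ** NpM e z) \<and>
          norm (matrix_inv (mat 1 + Lambda_minus_inv z ** NpM e z)) \<le> 4" by (rule inv_small)
    qed
  qed
qed


end
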